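(* Suppose $0<\epsilon\le 1$. Then the probability measure $\pi$ on $\mathcal{A}=\{A\subset\mathcal{E}\}$ defined in the context is stochastically dominated (with respect to inclusion) by independent Bernoulli bond percolation on $\mathcal{E}$ in which each edge $\{x,y\}$ is open with probability $2\epsilon J_{x,y}$. More precisely, for every $D\subset\mathcal{E}$ and every edge $e=\{x,y\}\in\mathcal{E}\setminus D$, \[ \pi(D\cup\{e\})\le 2\epsilon J_{x,y}\,\pi(D). \]
   Context: Setting: angles $\theta_u\in[0,2\pi)$, $u\in\mathbb{Z}^2$; couplings $J_{u,v}=J_{u-v}\ge0$ with $J_x=J_{-x}$, $\sum_xJ_x=1$. Fix $M\ge1$, $\Lambda=\{-M,\dots,M\}^2$, a boundary condition $\bar\theta$ (configurations satisfy $\theta_y=\bar\theta_y$ for $y\notin\Lambda$), and let $\mathcal{E}$ be the set of unordered pairs $\{u,v\}$ of distinct vertices meeting $\Lambda$. The interaction is written $f=\tilde f+\bar\epsilon$ where $\tilde f(t)=\sum_{k=1}^K c_k\cos(kt)$ is a trigonometric polynomial and $\bar\epsilon$ is a continuous $2\pi$-periodic function with $0\le\bar\epsilon\le\epsilon$. For $A\subset\mathcal{E}$ set \[ Z_A=\int\exp\Bigl\{\sum_{\{u,v\}\in\mathcal{E}}J_{u,v}\tilde f(\theta_u-\theta_v)\Bigr\}\prod_{\{u,v\}\in A}\bigl(e^{J_{u,v}\bar\epsilon(\theta_u-\theta_v)}-1\bigr)\,\prod_{u\in\Lambda}d\theta_u, \] $Z=\sum_{A\subset\mathcal{E}}Z_A$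 (which equals the partition function with interaction $f$), and $\pi(A)=Z_A/Z$. *)

theory Defs
  imports "HOL-Analysis.Analysis"
begin

type_synonym vertex = "int \<times> int"

definition box :: "int \<Rightarrow> vertex set" where
  "box M = {-M..M} \<times> {-M..M}"

definition edges :: "int \<Rightarrow> vertex set set" where
  "edges M = {{u, v} | u v. u \<noteq> v \<and> (u \<in> box M \<or> v \<in> box M)}"

definition ends :: "'a set \<Rightarrow> 'a \<times> 'a" where
  "ends e = (SOME p. fst p \<noteq> snd p \<and> e = {fst p, snd p})"

definition edge_J :: "(vertex \<Rightarrow> real) \<Rightarrow> vertex set \<Rightarrow> real" where
  "edge_J J e = J (fst (ends e) - snd (ends e))"

definition edge_diff :: "(vertex \<Rightarrow> real) \<Rightarrow> vertex set \<Rightarrow> real" where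
  "edge_diff \<theta> e = \<theta> (fst (ends e)) - \<theta> (snd (ends e))"

definition trig_poly :: "nat \<Rightarrow> (nat \<Rightarrow> real) \<Rightarrow> real \<Rightarrow> real" where
  "trig_poly K c t = (\<Sum>k=1..K. c k * cos (real k * t))"

text \<open>Product over a possibly infinite index set, as the limit of finite partial
  products along the net of finite subsets (agrees with the usual product for finite sets).\<close>
definition net_prod :: "('a \<Rightarrow> real) \<Rightarrow> 'a set \<Rightarrow> real" where
  "net_prod g A = Lim (finite_subsets_at_top A) (\<lambda>F. prod g F)"

text \<open>Configuration: free angles on Lambda, boundary condition outside.\<close>
definition config :: "int \<Rightarrow> (vertex \<Rightarrow> real) \<Rightarrow> (vertex \<Rightarrow> real) \<Rightarrow> vertex \<Rightarrow> real" where
  "config M \<theta>bar \<theta> y = (if y \<in> box M then \<theta> y else \<theta>bar y)"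

definition angle_measure :: "int \<Rightarrow> (vertex \<Rightarrow> real) measure" where
  "angle_measure M = PiM (box M) (\<lambda>_. restrict_space lborel {0..<2*pi})"

definition Z_A :: "(vertex \<Rightarrow> real) \<Rightarrow> int \<Rightarrow> (vertex \<Rightarrow> real) \<Rightarrow> (real \<Rightarrow> real)
                   \<Rightarrow> (real \<Rightarrow> real) \<Rightarrow> vertex set set \<Rightarrow> real" where
  "Z_A J M \<theta>bar ft eb A =
     integral\<^sup>L (angle_measure M)
       (\<lambda>\<theta>. let \<phi> = config M \<theta>bar \<theta> in
          exp (\<Sum>\<^sub>\<infinity>e\<in>edges M. edge_J J e * ft (edge_diff \<phi> e))
          * net_prod (\<lambda>e. exp (edge_J J e * eb (edge_diff \<phi> e)) - 1) A)"

definition Z_total :: "(vertex \<Rightarrow> real) \<Rightarrow> int \<Rightarrow> (vertex \<Rightarrow> real) \<Rightarrow> (real \<Rightarrow> real)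
                   \<Rightarrow> (real \<Rightarrow> real) \<Rightarrow> real" where
  "Z_total J M \<theta>bar ft eb = (\<Sum>\<^sub>\<infinity>A\<in>Pow (edges M). Z_A J M \<theta>bar ft eb A)"

definition edge_pi :: "(vertex \<Rightarrow> real) \<Rightarrow> int \<Rightarrow> (vertex \<Rightarrow> real) \<Rightarrow> (real \<Rightarrow> real)
                   \<Rightarrow> (real \<Rightarrow> real) \<Rightarrow> vertex set set \<Rightarrow> real" where
  "edge_pi J M \<theta>bar ft eb A = Z_A J M \<theta>bar ft eb A / Z_total J M \<theta>bar ft eb"

end

theory Submission
  imports Defs
begin

lemma ends_pair:
  assumes "x \<noteq> y"
  shows "ends {x,y} = (x,y) \<or> ends {x,y} = (y,x)"
proof -
  have "\<exists>p. fst p \<noteq> snd p \<and> {x,y} = {fst p, snd p}" using assms by (intro exI[of _ "(x,y)"]) auto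
  then have "fst (ends {x,y}) \<noteq> snd (ends {x,y}) \<and> {x,y} = {fst (ends {x,y}), snd (ends {x,y})}"
    unfolding ends_def by (rule someI_ex)
  then show ?thesis by (metis doubleton_eq_iff prod.collapse)
qed

lemma edge_J_pair:
  assumes "x \<noteq> y" "\<And>x. J x = J (- x)"
  shows "edge_J J {x,y} = J (x - y)"
  using ends_pair[OF assms(1)] assms(2)[of "x-y"] unfolding edge_J_def by auto

lemma edges_cases:
  assumes "e \<in> edges M"
  obtains x y where "x \<noteq> y" "e = {x,y}" "x \<in> box M"
proof -
  from assms obtain u v where uv: "e = {u,v}" "u \<noteq> v" "u \<in> box M \<or> v \<in> box M"
    unfolding edges_def by blast
  show ?thesis
  proof (cases "u \<in> box M")
    case True then show ?thesis using that uv by blast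
  next
    case False then show ?thesis using that[of v u] uv by (auto simp: insert_commute)
  qed
qed

lemma meas_comp:
  assumes "u \<in> box M"
  shows "(\<lambda>\<theta>. \<theta> u) \<in> borel_measurable (angle_measure M)"
proof -
  have "(\<lambda>\<theta>. \<theta> u) \<in> measurable (angle_measure M) (restrict_space lborel {0..<2*pi})"
    unfolding angle_measure_def using assms by (rule measurable_component_singleton)
  moreover have "(\<lambda>x. x) \<in> measurable (restrict_space lborel {0..<2*pi}) (borel :: real measure)"
    by (intro measurable_restrict_space1) simp
  ultimately have "(\<lambda>\<theta>. (\<lambda>x. x) (\<theta> u)) \<in> borel_measurable (angle_measure M)"
    by (rule measurable_compose)
  then show ?thesis by simp
qed

lemma meas_config:
  "(\<lambda>\<theta>. config M tb \<theta> y) \<in> borel_measurable (angle_measure M)"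
  unfolding config_def by (cases "y \<in> box M") (auto intro: meas_comp)

lemma meas_edge_diff:
  "(\<lambda>\<theta>. edge_diff (config M tb \<theta>) e) \<in> borel_measurable (angle_measure M)"
  unfolding edge_diff_def by (intro borel_measurable_diff meas_config)

lemma finite_measure_angle: "finite_measure (angle_measure M)"
proof -
  interpret product_sigma_finite "\<lambda>_::vertex. restrict_space lborel {0..<2*pi}"
    by (rule product_sigma_finite.intro, rule sigma_finite_measure_restrict_space) (simp_all add: sigma_finite_lborel)
  have fb: "finite (box M)" unfolding box_def by auto
  have "emeasure (angle_measure M) (space (angle_measure M)) = (\<Prod>i\<in>box M. emeasure (restrict_space lborel {0..<2*pi}) (space (restrict_space lborel {0..<2*pi})))"
    unfolding angle_measure_def space_PiM by (rule emeasure_PiM[OF fb]) (auto simp: sets_restrict_space)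
  also have "\<dots> = (\<Prod>i\<in>box M. ennreal (2*pi))"
    by (simp add: emeasure_restrict_space space_restrict_space)
  finally show ?thesis by (intro finite_measureI) (simp add: ennreal_power)
qed

lemma fin_ge:
  fixes f :: "'a \<Rightarrow> real"
  assumes "f summable_on A" "\<And>x. x \<in> A \<Longrightarrow> 0 \<le> f x" "\<delta> > 0"
  shows "finite {x\<in>A. \<delta> \<le> f x}"
proof (rule ccontr)
  assume inf: "infinite {x\<in>A. \<delta> \<le> f x}"
  define n where "n = nat (ceiling (infsum f A / \<delta>)) + 1"
  obtain B where B: "finite B" "card B = n" "B \<subseteq> {x\<in>A. \<delta> \<le> f x}"
    using infinite_arbitrarily_large[OF inf] by blast
  have "real (card B) * \<delta> \<le> sum f B"
    using B by (intro sum_bounded_below[where K=\<delta>, simplified]) auto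
  also have "\<dots> \<le> infsum f A"
    using B assms by (intro finite_sum_le_infsum) auto
  finally have "real n * \<delta> \<le> infsum f A" using B by simp
  moreover have "infsum f A / \<delta> < real n" unfolding n_def by linarith
  ultimately show False using assms(3) by (simp add: field_simps)
qed

lemma np_finite: "finite A \<Longrightarrow> net_prod g A = prod g A"
  unfolding net_prod_def finite_subsets_at_top_finite
  by (rule tendsto_Lim) (auto simp: trivial_limit_def eventually_principal)

lemma np_infinite:
  fixes g :: "'a \<Rightarrow> real"
  assumes inf: "infinite A" and finT: "finite {e\<in>A. 1/2 \<le> g e}"
    and bnd: "\<And>e. e \<in> A \<Longrightarrow> 0 \<le> g e \<and> g e \<le> 2"
  shows "net_prod g A = 0"
  unfolding net_prod_def
proof (rule tendsto_Lim)
  show "\<not> trivial_limit (finite_subsets_at_top A)"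
    by (simp add: finite_subsets_at_top_neq_bot)
  define T where "T = {e\<in>A. 1/2 \<le> g e}"
  show "(prod g \<longlongrightarrow> 0) (finite_subsets_at_top A)"
  proof (rule tendstoI)
    fix \<eta> :: real assume eta: "\<eta> > 0"
    obtain n where n: "(1/2::real)^n < \<eta> / 2^card T"
      using real_arch_pow_inv[of "\<eta> / 2^card T" "1/2"] eta by auto
    have "infinite (A - T)" using inf finT unfolding T_def by auto
    then obtain B where B: "finite B" "card B = n" "B \<subseteq> A - T"
      using infinite_arbitrarily_large by blast
    show "\<forall>\<^sub>F F in finite_subsets_at_top A. dist (prod g F) 0 < \<eta>"
      unfolding eventually_finite_subsets_at_top
    proof (intro exI[of _ "T \<union> B"] conjI allI impI)
      show "finite (T \<union> B)" using B finT T_def by auto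
      show "T \<union> B \<subseteq> A" using B T_def by auto
      fix Y assume Y: "finite Y \<and> T \<union> B \<subseteq> Y \<and> Y \<subseteq> A"
      have TY: "T \<subseteq> Y" using Y by auto
      have eq: "prod g Y = prod g (Y - T) * prod g T"
        using prod.subset_diff[OF TY] Y by auto
      have nn1: "0 \<le> prod g (Y - T)" using bnd Y by (intro prod_nonneg) auto
      have nn2: "0 \<le> prod g T" using bnd Y TY by (intro prod_nonneg) auto
      have p2: "prod g T \<le> 2 ^ card T"
        using bnd TY Y by (intro prod_le_power) auto
      have "prod g (Y - T) \<le> (\<Prod>e\<in>Y-T. 1/2)"
        using bnd Y unfolding T_def by (intro prod_mono) auto
      also have "\<dots> = (1/2)^card (Y - T)" by simp
      also have "\<dots> \<le> (1/2)^n"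
      proof -
        have "card B \<le> card (Y - T)" using B Y by (intro card_mono) auto
        then show ?thesis using B by (intro power_decreasing) auto
      qed
      finally have p1: "prod g (Y - T) \<le> (1/2)^n" .
      have "prod g Y \<le> (1/2)^n * 2^card T"
        unfolding eq using p1 p2 nn1 nn2 by (intro mult_mono) auto
      also have "\<dots> < \<eta>" using n by (simp add: field_simps)
      finally show "dist (prod g Y) 0 < \<eta>" using nn1 nn2 eq by simp
    qed
  qed
qed

lemma edge_J_bounds:
  assumes Jn: "\<And>x. J x \<ge> 0" and Js: "\<And>x. J x = J (- x)" and Jh: "(J has_sum 1) UNIV"
    and e: "e \<in> edges M"
  shows "0 \<le> edge_J J e \<and> edge_J J e \<le> 1"
proof -
  obtain x y where xy: "x \<noteq> y" "e = {x,y}" "x \<in> box M" using edges_cases[OF e] .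
  have "J (x - y) = sum J {x - y}" by simp
  also have "\<dots> \<le> infsum J UNIV"
    using Jh Jn by (intro finite_sum_le_infsum) (auto simp: has_sum_imp_summable)
  also have "\<dots> = 1" using Jh by (simp add: infsumI)
  finally show ?thesis using edge_J_pair[of x y J, OF xy(1) Js] xy Jn by simp
qed

lemma edges_summable:
  assumes Jn: "\<And>x. J x \<ge> 0" and Js: "\<And>x. J x = J (- x)" and Jh: "(J has_sum 1) UNIV"
  shows "(edge_J J) summable_on edges M"
proof (rule nonneg_bdd_above_summable_on)
  show "\<And>x. x \<in> edges M \<Longrightarrow> 0 \<le> edge_J J x" using edge_J_bounds[OF Jn Js Jh] by blast
  have "\<forall>e\<in>edges M. \<exists>p. fst p \<in> box M \<and> e = {fst p, fst p - snd p} \<and> edge_J J e = J (snd p)"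
  proof
    fix e assume e: "e \<in> edges M"
    obtain x y where xy: "x \<noteq> y" "e = {x,y}" "x \<in> box M" using edges_cases[OF e] .
    show "\<exists>p. fst p \<in> box M \<and> e = {fst p, fst p - snd p} \<and> edge_J J e = J (snd p)"
      using xy edge_J_pair[of x y J, OF xy(1) Js] by (intro exI[of _ "(x, x - y)"]) auto
  qed
  then obtain p where p: "\<And>e. e \<in> edges M \<Longrightarrow> fst (p e) \<in> box M \<and> e = {fst (p e), fst (p e) - snd (p e)} \<and> edge_J J e = J (snd (p e))"
    by metis
  have fb: "finite (box M)" unfolding box_def by auto
  have sJ: "J summable_on UNIV" using Jh by (auto simp: has_sum_imp_summable)
  have iJ: "infsum J UNIV = 1" using Jh by (simp add: infsumI)
  show "bdd_above (sum (edge_J J) ` {F. F \<subseteq> edges M \<and> finite F})"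
  proof (rule bdd_aboveI2[where M="real (card (box M))"])
    fix F assume F: "F \<in> {F. F \<subseteq> edges M \<and> finite F}"
    then have F1: "F \<subseteq> edges M" "finite F" by auto
    have inj: "inj_on p F"
    proof (rule inj_onI)
      fix a b assume "a \<in> F" "b \<in> F" "p a = p b"
      then show "a = b" using p F1 by (metis subsetD)
    qed
    define G where "G = snd ` p ` F"
    have "sum (edge_J J) F = sum (\<lambda>e. J (snd (p e))) F"
      using p F1 by (intro sum.cong) auto
    also have "\<dots> = sum (\<lambda>q. J (snd q)) (p ` F)"
      using sum.reindex[OF inj, of "\<lambda>q. J (snd q)"] by simp
    also have "\<dots> \<le> sum (\<lambda>q. J (snd q)) (box M \<times> G)"
    proof (rule sum_mono2)
      show "finite (box M \<times> G)" using fb F1 unfolding G_def by auto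
      show "p ` F \<subseteq> box M \<times> G"
      proof
        fix q assume "q \<in> p ` F"
        then obtain e where e: "e \<in> F" "q = p e" by blast
        then show "q \<in> box M \<times> G" using p[of e] F1 unfolding G_def mem_Times_iff by auto
      qed
      show "\<And>b. b \<in> box M \<times> G - p ` F \<Longrightarrow> 0 \<le> J (snd b)" using Jn by auto
    qed
    also have "\<dots> = (\<Sum>u\<in>box M. \<Sum>x\<in>G. J x)"
      unfolding sum.cartesian_product by (simp add: split_def)
    also have "\<dots> \<le> (\<Sum>u\<in>box M. 1)"
    proof (rule sum_mono)
      fix u show "(\<Sum>x\<in>G. J x) \<le> 1"
        using finite_sum_le_infsum[OF sJ, of G] Jn F1 iJ unfolding G_def by auto
    qed
    finally show "sum (edge_J J) F \<le> real (card (box M))" by simp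
  qed
qed

lemma meas_infsum:
  fixes f :: "'b \<Rightarrow> 'a \<Rightarrow> real"
  assumes "countable E" "infinite E"
    and m: "\<And>e. (\<lambda>\<theta>. f \<theta> e) \<in> borel_measurable N"
    and s: "\<And>\<theta>. (f \<theta>) summable_on E"
  shows "(\<lambda>\<theta>. infsum (f \<theta>) E) \<in> borel_measurable N"
proof -
  define n where "n = from_nat_into E"
  have bij: "bij_betw n UNIV E" unfolding n_def using assms(1,2) by (rule bij_betw_from_nat_into)
  show ?thesis
  proof (rule borel_measurable_LIMSEQ_real[where u="\<lambda>k \<theta>. \<Sum>i<k. f \<theta> (n i)"])
    fix \<theta>
    have eq: "infsum (f \<theta>) E = infsum (\<lambda>i. f \<theta> (n i)) UNIV"
      using infsum_reindex_bij_betw[OF bij] by metis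
    have "(\<lambda>i. f \<theta> (n i)) summable_on UNIV"
      using summable_on_reindex_bij_betw[OF bij] s by metis
    then have "(\<lambda>i. f \<theta> (n i)) sums infsum (f \<theta>) E"
      unfolding eq by (intro has_sum_imp_sums) (rule has_sum_infsum)
    then show "(\<lambda>k. \<Sum>i<k. f \<theta> (n i)) \<longlonglongrightarrow> infsum (f \<theta>) E"
      by (simp add: sums_def)
  next
    fix k show "(\<lambda>\<theta>. \<Sum>i<k. f \<theta> (n i)) \<in> borel_measurable N"
      using m by (intro borel_measurable_sum) auto
  qed
qed

lemma edges_countable: "countable (edges M)"
proof -
  have "edges M \<subseteq> (\<lambda>(u,v). {u,v}) ` UNIV" unfolding edges_def by auto
  then show ?thesis by (rule countable_subset) auto
qed

lemma edges_infinite: "M \<ge> 1 \<Longrightarrow> infinite (edges M)"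
proof
  assume M: "M \<ge> 1" and fin: "finite (edges M)"
  have "(\<lambda>k::nat. {(0::int,0::int), (int k + 1, 0)}) ` UNIV \<subseteq> edges M"
    using M unfolding edges_def box_def by force
  moreover have "inj (\<lambda>k::nat. {(0::int,0::int), (int k + 1, 0)})"
    by (rule injI) (auto simp: doubleton_eq_iff)
  ultimately show False using fin by (meson finite_imageD finite_subset infinite_UNIV_nat)
qed

lemma comp_cont_meas:
  assumes "continuous_on UNIV (h :: real \<Rightarrow> real)"
  shows "(\<lambda>\<theta>. h (edge_diff (config M tb \<theta>) e)) \<in> borel_measurable (angle_measure M)"
  using measurable_compose[OF meas_edge_diff borel_measurable_continuous_onI[OF assms]] .

lemma trig_cont: "continuous_on UNIV (trig_poly K c)"
  unfolding trig_poly_def by (intro continuous_intros)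

lemma trig_bound: "\<bar>trig_poly K c t\<bar> \<le> (\<Sum>k=1..K. \<bar>c k\<bar>)"
proof -
  have "\<bar>trig_poly K c t\<bar> \<le> (\<Sum>k=1..K. \<bar>c k * cos (real k * t)\<bar>)"
    unfolding trig_poly_def by (rule sum_abs)
  also have "\<dots> \<le> (\<Sum>k=1..K. \<bar>c k\<bar>)"
    by (intro sum_mono) (simp add: abs_mult mult_left_le)
  finally show ?thesis .
qed

lemma g_key:
  fixes j s \<epsilon> :: real
  assumes "0 \<le> j" "j \<le> 1" "0 \<le> s" "s \<le> \<epsilon>" "\<epsilon> \<le> 1"
  shows "0 \<le> exp (j * s) - 1 \<and> exp (j * s) - 1 \<le> 2 * \<epsilon> * j"
proof -
  define t where "t = j * s"
  have t0: "0 \<le> t" using assms unfolding t_def by simp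
  have t1: "t \<le> j * \<epsilon>" using assms unfolding t_def by (simp add: mult_left_mono)
  have t2: "j * \<epsilon> \<le> 1" using assms by (metis mult_le_one order_trans)
  have "exp t \<le> 1 + t + t^2" using t0 t1 t2 by (intro exp_bound) auto
  moreover have "t^2 \<le> t" using t0 t1 t2 mult_left_le[of t t] by (simp add: power2_eq_square)
  ultimately have "exp t - 1 \<le> 2 * t" by simp
  moreover have "0 \<le> exp t - 1" using t0 by simp
  ultimately show ?thesis using t1 unfolding t_def by (simp add: algebra_simps)
qed

lemma abs_help: "0 \<le> (j::real) \<Longrightarrow> \<bar>a\<bar> \<le> C \<Longrightarrow> \<bar>j * a\<bar> \<le> C * j"
  by (simp add: abs_mult) (metis mult.commute mult_left_mono)

lemma le2_help: "0 \<le> (\<epsilon>::real) \<Longrightarrow> \<epsilon> \<le> 1 \<Longrightarrow> 0 \<le> j \<Longrightarrow> j \<le> 1 \<Longrightarrow> g \<le> 2 * \<epsilon> * j \<Longrightarrow> g \<le> 2"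
proof -
  assume a: "0 \<le> \<epsilon>" "\<epsilon> \<le> 1" "0 \<le> j" "j \<le> 1" "g \<le> 2 * \<epsilon> * j"
  have "\<epsilon> * j \<le> 1" using a by (intro mult_le_one) auto
  then show ?thesis using a(5) by (simp add: mult.assoc)
qed

theorem mainTheorem4:
  fixes J :: "vertex \<Rightarrow> real" and M :: int and \<theta>bar :: "vertex \<Rightarrow> real"
    and K :: nat and c :: "nat \<Rightarrow> real" and eb :: "real \<Rightarrow> real" and \<epsilon> :: real
  assumes J_nonneg: "\<And>x. J x \<ge> 0"
    and J_sym: "\<And>x. J x = J (- x)"
    and J_sum: "(J has_sum 1) UNIV"
    and M_ge: "M \<ge> 1"
    and bc: "\<And>y. \<theta>bar y \<in> {0..<2*pi}"
    and eb_cont: "continuous_on UNIV eb"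
    and eb_per: "\<And>t. eb (t + 2*pi) = eb t"
    and eb_bounds: "\<And>t. 0 \<le> eb t \<and> eb t \<le> \<epsilon>"
    and eps: "0 < \<epsilon>" "\<epsilon> \<le> 1"
  shows "\<forall>D x y. D \<subseteq> edges M \<longrightarrow> x \<noteq> y \<longrightarrow> {x, y} \<in> edges M \<longrightarrow> {x, y} \<notin> D \<longrightarrow>
           edge_pi J M \<theta>bar (trig_poly K c) eb (insert {x, y} D)
             \<le> 2 * \<epsilon> * J (x - y) * edge_pi J M \<theta>bar (trig_poly K c) eb D"
proof (intro allI impI)
  define ft where "ft = trig_poly K c"
  define g where "g \<theta> e = exp (edge_J J e * eb (edge_diff (config M \<theta>bar \<theta>) e)) - 1" for \<theta> e
  define tm where "tm \<theta> e = edge_J J e * ft (edge_diff (config M \<theta>bar \<theta>) e)" for \<theta> e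
  define S where "S \<theta> = infsum (tm \<theta>) (edges M)" for \<theta>
  define C where "C = (\<Sum>k=1..K. \<bar>c k\<bar>)"
  let ?\<mu> = "angle_measure M"
  have ZA: "Z_A J M \<theta>bar ft eb A = integral\<^sup>L ?\<mu> (\<lambda>\<theta>. exp (S \<theta>) * net_prod (g \<theta>) A)" for A
    unfolding Z_A_def Let_def S_def tm_def g_def ..
  have ej: "e \<in> edges M \<Longrightarrow> 0 \<le> edge_J J e \<and> edge_J J e \<le> 1" for e
    using edge_J_bounds[OF J_nonneg J_sym J_sum] by blast
  have esum: "(edge_J J) summable_on edges M"
    using edges_summable[OF J_nonneg J_sym J_sum] .
  have C0: "0 \<le> C" unfolding C_def by (intro sum_nonneg) auto
  have ftb: "\<bar>ft t\<bar> \<le> C" for t unfolding ft_def C_def by (rule trig_bound)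
  have csum: "(\<lambda>e. C * edge_J J e) summable_on edges M"
    by (rule summable_on_cmult_right[OF esum])
  have tm_abs: "(\<lambda>e. norm (tm \<theta> e)) summable_on edges M" for \<theta>
  proof (rule Infinite_Sum.abs_summable_on_comparison_test)
    show "(\<lambda>e. norm (C * edge_J J e)) summable_on edges M"
      using summable_on_iff_abs_summable_on_real[THEN iffD1, OF csum] .
    fix e assume e: "e \<in> edges M"
    have "\<bar>tm \<theta> e\<bar> \<le> C * edge_J J e"
      unfolding tm_def using ej[OF e] ftb by (intro abs_help) auto
    then show "norm (tm \<theta> e) \<le> norm (C * edge_J J e)" using ej[OF e] C0 by simp
  qed
  have tm_sum: "(tm \<theta>) summable_on edges M" for \<theta>
    using summable_on_iff_abs_summable_on_real[THEN iffD2, OF tm_abs] .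
  define B where "B = infsum (\<lambda>e. C * edge_J J e) (edges M)"
  have Sb: "\<bar>S \<theta>\<bar> \<le> B" for \<theta>
  proof -
    have "\<bar>S \<theta>\<bar> \<le> infsum (\<lambda>e. norm (tm \<theta> e)) (edges M)"
      unfolding S_def using norm_infsum_bound[OF tm_abs] by simp
    also have "\<dots> \<le> B"
      unfolding B_def
    proof (rule infsum_mono)
      show "(\<lambda>e. norm (tm \<theta> e)) summable_on edges M" using tm_abs .
      show "(\<lambda>e. C * edge_J J e) summable_on edges M" using csum .
      fix e assume e: "e \<in> edges M"
      show "norm (tm \<theta> e) \<le> C * edge_J J e"
        unfolding tm_def real_norm_def using ej[OF e] ftb by (intro abs_help) auto
    qed
    finally show ?thesis .
  qed
  have Smeas: "S \<in> borel_measurable ?\<mu>"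
  proof -
    have "(\<lambda>\<theta>. infsum (tm \<theta>) (edges M)) \<in> borel_measurable ?\<mu>"
    proof (rule meas_infsum[OF edges_countable edges_infinite[OF M_ge]])
      fix e
      show "(\<lambda>\<theta>. tm \<theta> e) \<in> borel_measurable ?\<mu>"
        unfolding tm_def ft_def
        by (intro borel_measurable_times borel_measurable_const comp_cont_meas trig_cont)
    qed (rule tm_sum)
    then show ?thesis unfolding S_def[abs_def] .
  qed
  have gmeas: "(\<lambda>\<theta>. g \<theta> e) \<in> borel_measurable ?\<mu>" for e
  proof -
    have "(\<lambda>\<theta>. edge_J J e * eb (edge_diff (config M \<theta>bar \<theta>) e)) \<in> borel_measurable ?\<mu>"
      by (intro borel_measurable_times borel_measurable_const comp_cont_meas eb_cont)
    from measurable_compose[OF this borel_measurable_exp]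
    show ?thesis unfolding g_def by (intro borel_measurable_diff borel_measurable_const)
  qed
  have gb: "e \<in> edges M \<Longrightarrow> 0 \<le> g \<theta> e \<and> g \<theta> e \<le> 2 * \<epsilon> * edge_J J e" for \<theta> e
    unfolding g_def using ej[of e] eb_bounds eps by (intro g_key) auto
  have finJ: "finite {e\<in>edges M. 1/4 \<le> edge_J J e}"
    using fin_ge[OF esum, of "1/4"] ej by auto
  have np_inf: "A \<subseteq> edges M \<Longrightarrow> infinite A \<Longrightarrow> net_prod (g \<theta>) A = 0" for A \<theta>
  proof (rule np_infinite)
    assume A: "A \<subseteq> edges M" "infinite A"
    show "infinite A" using A by simp
    show "finite {e\<in>A. 1/2 \<le> g \<theta> e}"
    proof (rule finite_subset[OF _ finJ])
      show "{e\<in>A. 1/2 \<le> g \<theta> e} \<subseteq> {e\<in>edges M. 1/4 \<le> edge_J J e}"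
      proof
        fix e assume "e \<in> {e\<in>A. 1/2 \<le> g \<theta> e}"
        then have e: "e \<in> edges M" "1/2 \<le> g \<theta> e" using A by auto
        then have "1/2 \<le> 2 * \<epsilon> * edge_J J e" using gb[OF e(1), of \<theta>] by linarith
        moreover have "\<epsilon> * edge_J J e \<le> edge_J J e" using ej[OF e(1)] eps by (simp add: mult_left_le_one_le)
        ultimately show "e \<in> {e\<in>edges M. 1/4 \<le> edge_J J e}" using e by auto
      qed
    qed
    fix e assume "e \<in> A"
    then have e: "e \<in> edges M" using A by auto
    show "0 \<le> g \<theta> e \<and> g \<theta> e \<le> 2"
      using gb[OF e, of \<theta>] ej[OF e] eps
      by (intro conjI le2_help[of \<epsilon> "edge_J J _"]) auto
  qed
  have np_nn: "A \<subseteq> edges M \<Longrightarrow> 0 \<le> net_prod (g \<theta>) A" for A \<theta>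
  proof (cases "finite A")
    case True
    assume "A \<subseteq> edges M"
    then show ?thesis using True gb by (simp add: np_finite prod_nonneg subset_iff)
  next
    case False
    assume "A \<subseteq> edges M"
    then show ?thesis using np_inf False by simp
  qed
  have ZA_nn: "A \<subseteq> edges M \<Longrightarrow> 0 \<le> Z_A J M \<theta>bar ft eb A" for A
    unfolding ZA by (intro integral_nonneg_AE AE_I2 mult_nonneg_nonneg np_nn) auto
  have Zt: "0 \<le> Z_total J M \<theta>bar ft eb"
    unfolding Z_total_def by (intro infsum_nonneg ZA_nn) auto
  fix D x y
  assume D: "D \<subseteq> edges M" and xy: "x \<noteq> y" and e: "{x, y} \<in> edges M" and eD: "{x, y} \<notin> D"
  define e where "e = {x, y}"
  have eJ: "edge_J J e = J (x - y)" unfolding e_def by (rule edge_J_pair[of x y J, OF xy J_sym])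
  have De: "insert e D \<subseteq> edges M" using D e unfolding e_def by auto
  show "edge_pi J M \<theta>bar (trig_poly K c) eb (insert {x, y} D)
             \<le> 2 * \<epsilon> * J (x - y) * edge_pi J M \<theta>bar (trig_poly K c) eb D"
  proof (cases "finite D")
    case False
    have "Z_A J M \<theta>bar ft eb D = 0" unfolding ZA using np_inf[OF D False] by simp
    moreover have "Z_A J M \<theta>bar ft eb (insert e D) = 0"
      unfolding ZA using np_inf[OF De] False by simp
    ultimately show ?thesis unfolding edge_pi_def ft_def[symmetric] e_def[symmetric] by simp
  next
    case True
    define h where "h \<theta> = exp (S \<theta>) * prod (g \<theta>) D" for \<theta>
    have hint: "integrable ?\<mu> h"
    proof (rule finite_measure.integrable_const_bound[OF finite_measure_angle, where B="exp B * 2 ^ card D"])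
      show "AE \<theta> in ?\<mu>. norm (h \<theta>) \<le> exp B * 2 ^ card D"
      proof (rule AE_I2)
        fix \<theta>
        have p0: "0 \<le> prod (g \<theta>) D" using gb D by (intro prod_nonneg) auto
        have p2: "prod (g \<theta>) D \<le> 2 ^ card D"
        proof (rule prod_le_power)
          fix i assume i: "i \<in> D"
          then have ie: "i \<in> edges M" using D by auto
          show "0 \<le> g \<theta> i \<and> g \<theta> i \<le> 2"
            using gb[OF ie, of \<theta>] ej[OF ie] eps
            by (intro conjI le2_help[of \<epsilon> "edge_J J _"]) auto
        qed auto
        have "exp (S \<theta>) \<le> exp B" using Sb[of \<theta>] by simp
        then show "norm (h \<theta>) \<le> exp B * 2 ^ card D"
          unfolding h_def using p0 p2 by (simp add: abs_mult mult_mono)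
      qed
      show "h \<in> borel_measurable ?\<mu>"
        unfolding h_def
        by (intro borel_measurable_times borel_measurable_prod gmeas
              measurable_compose[OF Smeas borel_measurable_exp])
    qed
    have ZD: "Z_A J M \<theta>bar ft eb D = integral\<^sup>L ?\<mu> h"
      unfolding ZA h_def using np_finite[OF True] by simp
    have Zi: "Z_A J M \<theta>bar ft eb (insert e D) = integral\<^sup>L ?\<mu> (\<lambda>\<theta>. g \<theta> e * h \<theta>)"
      unfolding ZA h_def using True eD unfolding e_def
      by (simp add: np_finite mult.left_commute)
    have "integral\<^sup>L ?\<mu> (\<lambda>\<theta>. g \<theta> e * h \<theta>) \<le> integral\<^sup>L ?\<mu> (\<lambda>\<theta>. (2 * \<epsilon> * J (x - y)) * h \<theta>)"
    proof (rule integral_mono')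
      show "integrable ?\<mu> (\<lambda>\<theta>. 2 * \<epsilon> * J (x - y) * h \<theta>)" using hint by simp
      fix \<theta>
      have h0: "0 \<le> h \<theta>" unfolding h_def using gb D by (intro mult_nonneg_nonneg prod_nonneg) auto
      show "g \<theta> e * h \<theta> \<le> 2 * \<epsilon> * J (x - y) * h \<theta>"
        using gb[OF e[folded e_def], of \<theta>] eJ h0 by (intro mult_right_mono) auto
      show "0 \<le> 2 * \<epsilon> * J (x - y) * h \<theta>" using h0 eps J_nonneg by simp
    qed
    then have "Z_A J M \<theta>bar ft eb (insert e D) \<le> 2 * \<epsilon> * J (x - y) * Z_A J M \<theta>bar ft eb D"
      unfolding Zi ZD by simp
    then have "Z_A J M \<theta>bar ft eb (insert e D) / Z_total J M \<theta>bar ft eb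
        \<le> 2 * \<epsilon> * J (x - y) * Z_A J M \<theta>bar ft eb D / Z_total J M \<theta>bar ft eb"
      using Zt by (rule divide_right_mono)
    then show ?thesis unfolding edge_pi_def ft_def[symmetric] e_def[symmetric] by simp
  qed
qed

end
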